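(* Let $c>0$ and $T>0$. For $t\in[0,T]$ and a function $h(\xi)$ on $\mathbb{R}^2$ define \[ \|h\|_{t}:=\left\|\frac{(1+|\xi|)^3 h(\xi)}{e^{-c|\xi|t}+e^{-c|\xi|(T-t)}}\right\|_{L^\infty(\mathbb{R}^2_\xi)}, \] and for $\hat f(\xi,s)$ defined for $s\in[0,T]$ set $\|\hat f\|:=\sup_{s\in[0,T]}\|\hat f(\cdot,s)\|_s$. There exists $K>0$ (independent of $T$) such that for any $\hat f$ with $\|\hat f\|<+\infty$ and all $t\in[0,T]$, \[ \left\|\int_0^t e^{-2c|\xi|(t-s)}|\xi|\,\hat f(\xi,s)\,ds\right\|_t\leqslant K\|\hat f\|. \]
   Context: $\xi\in\mathbb{R}^2$ is the Fourier variable. *)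

theory Defs
  imports "HOL-Analysis.Analysis" "HOL-Probability.Essential_Supremum"
begin

definition wnorm :: "real \<Rightarrow> real \<Rightarrow> real \<Rightarrow> (real^2 \<Rightarrow> complex) \<Rightarrow> ereal" where
  "wnorm c T t h = esssup lebesgue
     (\<lambda>\<xi>. ereal ((1 + norm \<xi>) ^ 3 * cmod (h \<xi>) /
                  (exp (- c * norm \<xi> * t) + exp (- c * norm \<xi> * (T - t)))))"

definition wnorm_total :: "real \<Rightarrow> real \<Rightarrow> (real^2 \<Rightarrow> real \<Rightarrow> complex) \<Rightarrow> ereal" where
  "wnorm_total c T f = (SUP s\<in>{0..T}. wnorm c T s (\<lambda>\<xi>. f \<xi> s))"

end

theory Submission
  imports Defs
begin

lemma keyineq:
  fixes a c u t T :: real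
  assumes "a \<ge> 0" "c > 0" "0 \<le> u" "u \<le> t" "t \<le> T"
  shows "exp (-2*c*a*(t-u)) * (exp (-c*a*u) + exp (-c*a*(T-u)))
         \<le> exp (-c*a*(t-u)) * (exp (-c*a*t) + exp (-c*a*(T-t)))"
proof -
  have e1: "exp (-2*c*a*(t-u)) * exp (-c*a*u) = exp (-c*a*(t-u)) * exp (-c*a*t)"
    by (simp add: mult_exp_exp algebra_simps)
  have "-2*c*a*(t-u) + -c*a*(T-u) \<le> -c*a*(t-u) + -c*a*(T-t)"
  proof -
    have "0 \<le> c*a*(t-u)" using assms by simp
    then show ?thesis by (simp add: algebra_simps)
  qed
  then have e2: "exp (-2*c*a*(t-u)) * exp (-c*a*(T-u)) \<le> exp (-c*a*(t-u)) * exp (-c*a*(T-t))"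
    by (simp add: mult_exp_exp)
  show ?thesis using e1 e2 by (simp add: distrib_left)
qed

lemma intbound:
  fixes a c t :: real
  assumes "a \<ge> 0" "c > 0" "0 \<le> t"
  shows "integrable lborel (\<lambda>u. indicator {0..t} u *\<^sub>R (a * exp (-c*a*(t-u))))"
    and "integral\<^sup>L lborel (\<lambda>u. indicator {0..t} u *\<^sub>R (a * exp (-c*a*(t-u)))) \<le> 1/c"
proof -
  show "integrable lborel (\<lambda>u. indicator {0..t} u *\<^sub>R (a * exp (-c*a*(t-u))))"
    using borel_integrable_atLeastAtMost'[of 0 t "\<lambda>u. a * exp (-c*a*(t-u))"]
    by (simp add: set_integrable_def continuous_intros)
  have "integral\<^sup>L lborel (\<lambda>u. indicator {0..t} u *\<^sub>R (a * exp (-c*a*(t-u))))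
      = exp (-c*a*(t-t))/c - exp (-c*a*(t-0))/c"
  proof (rule integral_FTC_atLeastAtMost[OF assms(3)])
    fix x assume "0 \<le> x" "x \<le> t"
    have "((\<lambda>u. exp (-c*a*(t-u))/c) has_real_derivative (exp (-c*a*(t-x)) * (c*a) / c)) (at x within {0..t})"
      by (auto intro!: derivative_eq_intros)
    then show "((\<lambda>u. exp (-c*a*(t-u))/c) has_vector_derivative a * exp (-c*a*(t-x))) (at x within {0..t})"
      using assms by (simp add: has_real_derivative_iff_has_vector_derivative mult.commute)
  next
    show "continuous_on {0..t} (\<lambda>u. a * exp (-c*a*(t-u)))" by (auto intro!: continuous_intros)
  qed
  also have "\<dots> \<le> 1/c" using assms by (simp add: divide_simps)
  finally show "integral\<^sup>L lborel (\<lambda>u. indicator {0..t} u *\<^sub>R (a * exp (-c*a*(t-u)))) \<le> 1/c" .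
qed

theorem lemma8:
  fixes c :: real
  assumes "c > 0"
  shows "\<exists>K>0. \<forall>T>0. \<forall>f :: real^2 \<Rightarrow> real \<Rightarrow> complex.
           (\<lambda>p. if snd p \<in> {0..T} then f (fst p) (snd p) else 0) \<in> borel_measurable borel \<longrightarrow>
           wnorm_total c T f < \<infinity> \<longrightarrow>
           (\<forall>t\<in>{0..T}.
              wnorm c T t (\<lambda>\<xi>. LINT s:{0..t}|lborel.
                   complex_of_real (exp (- 2 * c * norm \<xi> * (t - s)) * norm \<xi>) * f \<xi> s)
              \<le> ereal K * wnorm_total c T f)"
proof (intro exI[of _ "1/c"] conjI allI impI ballI)
  show "1/c > 0" using assms by simp
  fix T :: real and f :: "real^2 \<Rightarrow> real \<Rightarrow> complex" and t :: real
  assume T: "T > 0"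
    and meas: "(\<lambda>p. if snd p \<in> {0..T} then f (fst p) (snd p) else 0) \<in> borel_measurable borel"
    and fin: "wnorm_total c T f < \<infinity>" and t: "t \<in> {0..T}"
  define g where "g = (\<lambda>p. if snd p \<in> {0..T} then f (fst p) (snd p) else 0)"
  define w where "w = (\<lambda>(\<xi>::real^2) (u::real). exp (- c * norm \<xi> * u) + exp (- c * norm \<xi> * (T - u)))"
  have wpos: "w \<xi> u > 0" for \<xi> u unfolding w_def by (intro add_pos_pos) auto
  have gm[measurable]: "g \<in> borel_measurable (lborel \<Otimes>\<^sub>M lborel)"
    using meas unfolding g_def lborel_prod by simp
  define M where "M = wnorm_total c T f"
  have le_M: "wnorm c T u (\<lambda>\<xi>. f \<xi> u) \<le> M" if "u \<in> {0..T}" for u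
    unfolding M_def wnorm_total_def using that by (auto intro: SUP_upper)
  have M0: "0 \<le> M"
  proof -
    let ?h = "\<lambda>\<xi>. ereal ((1 + norm \<xi>) ^ 3 * cmod (f \<xi> 0) /
                  (exp (- c * norm \<xi> * 0) + exp (- c * norm \<xi> * (T - 0))))"
    have "0 \<le> esssup lebesgue ?h"
    proof (cases "?h \<in> borel_measurable lebesgue")
      case True
      have "esssup lebesgue (\<lambda>_::real^2. 0::ereal) \<le> esssup lebesgue ?h"
        using esssup_mono[of "\<lambda>_. 0::ereal" "lebesgue::(real^2) measure" ?h]
        by (auto intro!: divide_nonneg_pos add_pos_pos)
      moreover have "esssup lebesgue (\<lambda>_::real^2. 0::ereal) = 0"
        by (rule esssup_const) simp
      ultimately show ?thesis by simp
    next
      case False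
      then show ?thesis by (simp add: esssup_non_measurable)
    qed
    also have "\<dots> \<le> M" using le_M[of 0] T unfolding wnorm_def by simp
    finally show ?thesis .
  qed
  obtain m where mM: "M = ereal m" and m0: "0 \<le> m"
    using M0 fin unfolding M_def[symmetric] by (cases M) auto
  have fs: "AE \<xi> in lborel. (1 + norm \<xi>) ^ 3 * cmod (f \<xi> u) \<le> m * w \<xi> u" if u: "u \<in> {0..T}" for u
  proof -
    let ?hu = "\<lambda>\<xi>::real^2. ereal ((1 + norm \<xi>) ^ 3 * cmod (f \<xi> u) / w \<xi> u)"
    have "AE \<xi> in lebesgue. ?hu \<xi> \<le> esssup lebesgue ?hu" by (rule esssup_AE)
    moreover have "esssup lebesgue ?hu \<le> M" using le_M[OF u] unfolding wnorm_def w_def by simp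
    ultimately have "AE \<xi> in lebesgue. ereal ((1 + norm \<xi>) ^ 3 * cmod (f \<xi> u) / w \<xi> u) \<le> M"
      by (auto elim: eventually_mono)
    then have "AE \<xi> in lborel. ereal ((1 + norm \<xi>) ^ 3 * cmod (f \<xi> u) / w \<xi> u) \<le> M"
      by (simp add: AE_completion_iff)
    then show ?thesis
    proof (rule eventually_mono)
      fix \<xi> assume "ereal ((1 + norm \<xi>) ^ 3 * cmod (f \<xi> u) / w \<xi> u) \<le> M"
      then have "(1 + norm \<xi>) ^ 3 * cmod (f \<xi> u) / w \<xi> u \<le> m" by (simp add: mM)
      then show "(1 + norm \<xi>) ^ 3 * cmod (f \<xi> u) \<le> m * w \<xi> u"
        using wpos[of \<xi> u] by (simp add: divide_le_eq)
    qed
  qed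
  have ae1: "AE \<xi> in lborel. AE u in lborel. u \<in> {0..T} \<longrightarrow> (1 + norm \<xi>) ^ 3 * cmod (g (\<xi>, u)) \<le> m * w \<xi> u"
  proof -
    have PS: "pair_sigma_finite (lborel :: (real^2) measure) (lborel :: real measure)"
      by (simp add: pair_sigma_finite.intro lborel.sigma_finite_measure_axioms)
    have "AE u in lborel. AE \<xi> in lborel. u \<in> {0..T} \<longrightarrow> (1 + norm \<xi>) ^ 3 * cmod (g (\<xi>, u)) \<le> m * w \<xi> u"
    proof (rule AE_I2)
      fix u :: real
      show "AE \<xi> in lborel. u \<in> {0..T} \<longrightarrow> (1 + norm \<xi>) ^ 3 * cmod (g (\<xi>, u)) \<le> m * w \<xi> u"
        using fs[of u] by (cases "u \<in> {0..T}") (auto simp: g_def)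
    qed
    moreover have "{x \<in> space (lborel \<Otimes>\<^sub>M lborel). snd x \<in> {0..T} \<longrightarrow> (1 + norm (fst x)) ^ 3 * cmod (g (fst x, snd x)) \<le> m * w (fst x) (snd x)} \<in> sets (lborel \<Otimes>\<^sub>M lborel)"
      unfolding w_def by measurable
    ultimately show ?thesis
      using pair_sigma_finite.AE_commute[OF PS, of "\<lambda>\<xi> u. u \<in> {0..T} \<longrightarrow> (1 + norm \<xi>) ^ 3 * cmod (g (\<xi>, u)) \<le> m * w \<xi> u"]
      by simp
  qed
  define I where "I = (\<lambda>\<xi>. LINT s:{0..t}|lborel.
                   complex_of_real (exp (- 2 * c * norm \<xi> * (t - s)) * norm \<xi>) * f \<xi> s)"
  have I_eq: "I \<xi> = integral\<^sup>L lborel (\<lambda>u. indicator {0..t} u *\<^sub>R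
                   (complex_of_real (exp (- 2 * c * norm \<xi> * (t - u)) * norm \<xi>) * g (\<xi>, u)))" for \<xi>
    unfolding I_def set_lebesgue_integral_def
    using t by (intro Bochner_Integration.integral_cong) (auto simp: g_def indicator_def)
  have Im: "I \<in> borel_measurable lborel"
    unfolding I_eq[abs_def] by measurable
  have bound: "(1 + norm \<xi>) ^ 3 * cmod (I \<xi>) \<le> (1/c) * m * w \<xi> t"
    if H: "AE u in lborel. u \<in> {0..T} \<longrightarrow> (1 + norm \<xi>) ^ 3 * cmod (g (\<xi>, u)) \<le> m * w \<xi> u" for \<xi>
  proof -
    define a where "a = norm \<xi>"
    define P where "P = (1 + a) ^ 3"
    have a0: "a \<ge> 0" unfolding a_def by simp
    have P0: "P > 0" unfolding P_def using a0 by simp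
    define C where "C = m * w \<xi> t / P"
    have C0: "C \<ge> 0" unfolding C_def using m0 wpos[of \<xi> t] P0 by simp
    have "cmod (I \<xi>) \<le> integral\<^sup>L lborel (\<lambda>u. norm (indicator {0..t} u *\<^sub>R
                   (complex_of_real (exp (- 2 * c * norm \<xi> * (t - u)) * norm \<xi>) * g (\<xi>, u))))"
      unfolding I_eq by (rule integral_norm_bound)
    also have "\<dots> \<le> integral\<^sup>L lborel (\<lambda>u. C * (indicator {0..t} u *\<^sub>R (a * exp (-c*a*(t-u)))))"
    proof (rule integral_mono_AE')
      show "integrable lborel (\<lambda>u. C * (indicator {0..t} u *\<^sub>R (a * exp (-c*a*(t-u)))))"
        using intbound(1)[OF a0 assms, of t] t by simp
      show "AE u in lborel. 0 \<le> C * (indicator {0..t} u *\<^sub>R (a * exp (-c*a*(t-u))))"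
        using C0 a0 by (auto intro!: AE_I2)
      show "AE u in lborel. norm (indicator {0..t} u *\<^sub>R
                   (complex_of_real (exp (- 2 * c * norm \<xi> * (t - u)) * norm \<xi>) * g (\<xi>, u)))
            \<le> C * (indicator {0..t} u *\<^sub>R (a * exp (-c*a*(t-u))))"
        using H
      proof (rule eventually_mono)
        fix u assume Hu: "u \<in> {0..T} \<longrightarrow> (1 + norm \<xi>) ^ 3 * cmod (g (\<xi>, u)) \<le> m * w \<xi> u"
        show "norm (indicator {0..t} u *\<^sub>R
                   (complex_of_real (exp (- 2 * c * norm \<xi> * (t - u)) * norm \<xi>) * g (\<xi>, u)))
            \<le> C * (indicator {0..t} u *\<^sub>R (a * exp (-c*a*(t-u))))"
        proof (cases "u \<in> {0..t}")
          case False then show ?thesis by simp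
        next
          case True
          then have uT: "u \<in> {0..T}" using t by auto
          have gb: "cmod (g (\<xi>, u)) \<le> m * w \<xi> u / P"
            using Hu uT P0 unfolding P_def a_def by (simp add: le_divide_eq mult.commute)
          have key: "exp (-2*c*a*(t-u)) * w \<xi> u \<le> exp (-c*a*(t-u)) * w \<xi> t"
            using keyineq[OF a0 assms, of u t T] True t unfolding w_def a_def by simp
          have "norm (indicator {0..t} u *\<^sub>R
                   (complex_of_real (exp (- 2 * c * norm \<xi> * (t - u)) * norm \<xi>) * g (\<xi>, u)))
              = exp (-2*c*a*(t-u)) * a * cmod (g (\<xi>, u))"
            using True a0 unfolding a_def by (simp add: norm_mult)
          also have "\<dots> \<le> exp (-2*c*a*(t-u)) * a * (m * w \<xi> u / P)"
            using gb a0 by (intro mult_left_mono) auto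
          also have "\<dots> = a * m / P * (exp (-2*c*a*(t-u)) * w \<xi> u)" by simp
          also have "\<dots> \<le> a * m / P * (exp (-c*a*(t-u)) * w \<xi> t)"
            using key a0 m0 P0 by (intro mult_left_mono) auto
          also have "\<dots> = C * (indicator {0..t} u *\<^sub>R (a * exp (-c*a*(t-u))))"
            using True unfolding C_def by simp
          finally show ?thesis .
        qed
      qed
    qed
    also have "\<dots> = C * integral\<^sup>L lborel (\<lambda>u. indicator {0..t} u *\<^sub>R (a * exp (-c*a*(t-u))))"
      by simp
    also have "\<dots> \<le> C * (1/c)"
      using intbound(2)[OF a0 assms, of t] t C0 by (intro mult_left_mono) auto
    finally have "cmod (I \<xi>) \<le> C * (1/c)" .
    then have "P * cmod (I \<xi>) \<le> P * (C * (1/c))" using P0 by (intro mult_left_mono) auto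
    also have "\<dots> = (1/c) * m * w \<xi> t" unfolding C_def using P0 by simp
    finally show ?thesis unfolding P_def a_def .
  qed
  have "wnorm c T t I \<le> ereal ((1/c) * m)"
    unfolding wnorm_def
  proof (rule esssup_I)
    show "(\<lambda>\<xi>. ereal ((1 + norm \<xi>) ^ 3 * cmod (I \<xi>) /
                  (exp (- c * norm \<xi> * t) + exp (- c * norm \<xi> * (T - t))))) \<in> borel_measurable lebesgue"
      by (intro measurable_completion) (use Im in measurable)
    show "AE \<xi> in lebesgue. ereal ((1 + norm \<xi>) ^ 3 * cmod (I \<xi>) /
                  (exp (- c * norm \<xi> * t) + exp (- c * norm \<xi> * (T - t)))) \<le> ereal ((1/c) * m)"
      unfolding AE_completion_iff using ae1
    proof (rule eventually_mono)
      fix \<xi> assume "AE u in lborel. u \<in> {0..T} \<longrightarrow> (1 + norm \<xi>) ^ 3 * cmod (g (\<xi>, u)) \<le> m * w \<xi> u"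
      from bound[OF this] wpos[of \<xi> t]
      show "ereal ((1 + norm \<xi>) ^ 3 * cmod (I \<xi>) /
                  (exp (- c * norm \<xi> * t) + exp (- c * norm \<xi> * (T - t)))) \<le> ereal ((1/c) * m)"
        unfolding w_def by (simp add: divide_le_eq)
    qed
  qed
  then show "wnorm c T t (\<lambda>\<xi>. LINT s:{0..t}|lborel.
                   complex_of_real (exp (- 2 * c * norm \<xi> * (t - s)) * norm \<xi>) * f \<xi> s)
              \<le> ereal (1/c) * wnorm_total c T f"
    unfolding I_def[symmetric] M_def[symmetric] mM by simp
qed

end
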